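(* Let $\theta,\alpha\in(0,\pi/2)$ with $\theta\ne\pi/4$. For $b\in\mathrm{Im}\,\mathbb{H}$ and $c\in\mathbb{H}$ set $$V=\begin{bmatrix}-b\cos^2\alpha\cos\theta\sin\theta\\ b\cos\alpha\sin\alpha\cos\theta\end{bmatrix},\qquad W=\begin{bmatrix}\bar c\sin\alpha\sin^2\theta+c\sin\alpha\cos^2\theta\\ \bar c\cos\alpha\sin\theta\end{bmatrix}.$$ If there exist non-zero $b\in\mathrm{Im}\,\mathbb{H}$ and $c\in\mathbb{H}$ with $V=W$, then $\tan^2\alpha=\dfrac{\sin^2\theta}{\cos^2\theta-\sin^2\theta}$.
   Context: $\mathbb{H}$ denotes the quaternions and $\mathrm{Im}\,\mathbb{H}$ the purely imaginary quaternions; $\bar c$ is quaternionic conjugation. *)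

theory Defs
  imports Complex_Main
begin

text \<open>Quaternions H, represented by their four real coordinates q = a + b i + c j + d k.
  Only the real vector space operations and conjugation are needed.\<close>

datatype quat = Quat (qre: real) (qi: real) (qj: real) (qk: real)

definition quat_zero :: quat where
  "quat_zero = Quat 0 0 0 0"

definition quat_add :: "quat \<Rightarrow> quat \<Rightarrow> quat" where
  "quat_add p q = Quat (qre p + qre q) (qi p + qi q) (qj p + qj q) (qk p + qk q)"

definition quat_scale :: "real \<Rightarrow> quat \<Rightarrow> quat" where
  "quat_scale r q = Quat (r * qre q) (r * qi q) (r * qj q) (r * qk q)"

definition quat_neg :: "quat \<Rightarrow> quat" where
  "quat_neg q = Quat (- qre q) (- qi q) (- qj q) (- qk q)"

definition quat_cnj :: "quat \<Rightarrow> quat" where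
  "quat_cnj q = Quat (qre q) (- qi q) (- qj q) (- qk q)"

definition quat_imag :: "quat set" where
  "quat_imag = {q. qre q = 0}"

end

theory Submission
  imports Defs
begin

lemma key:
  fixes ca sa ct st u v :: real
  assumes "ca > 0" "sa > 0" "ct > 0" "st > 0" "u \<noteq> 0"
    and e1: "ca\<^sup>2 * ct * st * (- u) = sa * st\<^sup>2 * (- v) + sa * ct\<^sup>2 * v"
    and e2: "ca * sa * ct * u = ca * st * (- v)"
  shows "ca\<^sup>2 * st\<^sup>2 = sa\<^sup>2 * (ct\<^sup>2 - st\<^sup>2)"
proof -
  have "ca * (st * v) = ca * (- sa * ct * u)" using e2 by (simp add: algebra_simps)
  hence v: "st * v = - sa * ct * u" using assms(1) mult_left_cancel[of ca "st * v" "- sa * ct * u"] by linarith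
  have "st * (ca\<^sup>2 * ct * st * (- u)) = sa * (ct\<^sup>2 - st\<^sup>2) * (st * v)"
  proof -
    have "st * (ca\<^sup>2 * ct * st * (- u)) = st * (sa * st\<^sup>2 * (- v) + sa * ct\<^sup>2 * v)" using e1 by simp
    thus ?thesis by (simp add: algebra_simps)
  qed
  also have "\<dots> = - sa\<^sup>2 * ct * (ct\<^sup>2 - st\<^sup>2) * u" using v by (simp add: power2_eq_square algebra_simps)
  finally have "(ct * u) * (ca\<^sup>2 * st\<^sup>2) = (ct * u) * (sa\<^sup>2 * (ct\<^sup>2 - st\<^sup>2))"
    by (simp add: power2_eq_square algebra_simps)
  moreover have "ct * u \<noteq> 0" using assms by simp
  ultimately show ?thesis by simp
qed

theorem proposition3p2:
  fixes \<theta> \<alpha> :: real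
  assumes "0 < \<theta>" "\<theta> < pi / 2" "0 < \<alpha>" "\<alpha> < pi / 2" "\<theta> \<noteq> pi / 4"
    and "\<exists>b c. b \<in> quat_imag \<and> b \<noteq> quat_zero \<and> c \<noteq> quat_zero \<and>
           quat_scale ((cos \<alpha>)\<^sup>2 * cos \<theta> * sin \<theta>) (quat_neg b) =
             quat_add (quat_scale (sin \<alpha> * (sin \<theta>)\<^sup>2) (quat_cnj c))
                      (quat_scale (sin \<alpha> * (cos \<theta>)\<^sup>2) c) \<and>
           quat_scale (cos \<alpha> * sin \<alpha> * cos \<theta>) b =
             quat_scale (cos \<alpha> * sin \<theta>) (quat_cnj c)"
  shows "(tan \<alpha>)\<^sup>2 = (sin \<theta>)\<^sup>2 / ((cos \<theta>)\<^sup>2 - (sin \<theta>)\<^sup>2)"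
proof -
  have ca: "cos \<alpha> > 0" using assms by (intro cos_gt_zero_pi) auto
  have sa: "sin \<alpha> > 0" using assms by (intro sin_gt_zero) auto
  have ct: "cos \<theta> > 0" using assms by (intro cos_gt_zero_pi) auto
  have st: "sin \<theta> > 0" using assms by (intro sin_gt_zero) auto
  obtain b c where b: "b \<in> quat_imag" "b \<noteq> quat_zero" and
    e1: "quat_scale ((cos \<alpha>)\<^sup>2 * cos \<theta> * sin \<theta>) (quat_neg b) =
             quat_add (quat_scale (sin \<alpha> * (sin \<theta>)\<^sup>2) (quat_cnj c))
                      (quat_scale (sin \<alpha> * (cos \<theta>)\<^sup>2) c)" and
    e2: "quat_scale (cos \<alpha> * sin \<alpha> * cos \<theta>) b =
             quat_scale (cos \<alpha> * sin \<theta>) (quat_cnj c)"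
    using assms(6) by blast
  obtain b0 b1 b2 b3 where bq: "b = Quat b0 b1 b2 b3" by (cases b)
  obtain c0 c1 c2 c3 where cq: "c = Quat c0 c1 c2 c3" by (cases c)
  have b0: "b0 = 0" using b bq by (simp add: quat_imag_def)
  have nz: "b1 \<noteq> 0 \<or> b2 \<noteq> 0 \<or> b3 \<noteq> 0" using b bq b0 by (auto simp: quat_zero_def)
  have E1: "(cos \<alpha>)\<^sup>2 * cos \<theta> * sin \<theta> * (- bi) = sin \<alpha> * (sin \<theta>)\<^sup>2 * (- ci) + sin \<alpha> * (cos \<theta>)\<^sup>2 * ci
     \<and> cos \<alpha> * sin \<alpha> * cos \<theta> * bi = cos \<alpha> * sin \<theta> * (- ci)"
    if "(bi, ci) \<in> {(b1, c1), (b2, c2), (b3, c3)}" for bi ci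
    using that e1 e2 bq cq
    by (auto simp: quat_scale_def quat_add_def quat_cnj_def quat_neg_def)
  have K: "(cos \<alpha>)\<^sup>2 * (sin \<theta>)\<^sup>2 = (sin \<alpha>)\<^sup>2 * ((cos \<theta>)\<^sup>2 - (sin \<theta>)\<^sup>2)"
    using nz
  proof (elim disjE)
    assume "b1 \<noteq> 0" thus ?thesis using E1[of b1 c1] key[OF ca sa ct st] by auto
  next
    assume "b2 \<noteq> 0" thus ?thesis using E1[of b2 c2] key[OF ca sa ct st] by auto
  next
    assume "b3 \<noteq> 0" thus ?thesis using E1[of b3 c3] key[OF ca sa ct st] by auto
  qed
  have d: "(cos \<theta>)\<^sup>2 - (sin \<theta>)\<^sup>2 \<noteq> 0"
  proof
    assume "(cos \<theta>)\<^sup>2 - (sin \<theta>)\<^sup>2 = 0"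
    with K have "(cos \<alpha>)\<^sup>2 * (sin \<theta>)\<^sup>2 = 0" by simp
    with ca st show False by simp
  qed
  show ?thesis using K d ca
    by (simp add: tan_def power_divide field_simps)
qed

end
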